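(* Let $A\in\mathbb{R}^{n\times n}$, let $W\in\mathbb{R}^{n\times n}$ be symmetric positive definite, let $C=\mathrm{diag}(C_{11},\dots,C_{nn})$ be diagonal positive definite and $V=\mathrm{diag}(\sigma_1^2,\dots,\sigma_n^2)$ with $\sigma_j>0$. Let $\Sigma$ be the unique positive semidefinite solution of $\Sigma=A\Sigma A^T-A\Sigma C^T(C\Sigma C^T+V)^{-1}C\Sigma A^T+W$, and let $\overline\Sigma=\Sigma-\Sigma C^T(C\Sigma C^T+V)^{-1}C\Sigma=(C^TV^{-1}C+\Sigma^{-1})^{-1}$ be the steady-state a posteriori error covariance of the Kalman filter. Then $$\frac{n\sigma_u^2}{C_u^2+\sigma_u^2\lambda_n^{-1}(W)}\le\mathrm{tr}\,\overline\Sigma\le n\frac{\sigma_l^2}{C_l^2}.$$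
   Context: $\lambda_n(\cdot)$ denotes the smallest eigenvalue. The indices $l,u$ are defined by $l=\arg\min_{1\le j\le n}C_{jj}^2/\sigma_j^2$ and $u=\arg\max_{1\le j\le n}C_{jj}^2/\sigma_j^2$, with $C_l:=C_{ll}$, $C_u:=C_{uu}$. *)

theory Defs
  imports "HOL-Analysis.Analysis"
begin

definition diag_mat :: "('n::finite \<Rightarrow> real) \<Rightarrow> real^'n^'n" where
  "diag_mat d = (\<chi> i j. if i = j then d i else 0)"

definition sym_mat :: "real^'n^'n \<Rightarrow> bool" where
  "sym_mat M \<longleftrightarrow> transpose M = M"

definition pos_def :: "real^'n^'n \<Rightarrow> bool" where
  "pos_def M \<longleftrightarrow> sym_mat M \<and> (\<forall>x. x \<noteq> 0 \<longrightarrow> x \<bullet> (M *v x) > 0)"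

definition pos_semidef :: "real^'n^'n \<Rightarrow> bool" where
  "pos_semidef M \<longleftrightarrow> sym_mat M \<and> (\<forall>x. x \<bullet> (M *v x) \<ge> 0)"

definition eigenvalues :: "real^'n^'n \<Rightarrow> real set" where
  "eigenvalues M = {e. \<exists>v. v \<noteq> 0 \<and> M *v v = e *\<^sub>R v}"

definition lambda_min :: "real^'n^'n \<Rightarrow> real" where
  "lambda_min M = Min (eigenvalues M)"

end

theory Submission
  imports Defs
begin

lemma adj: "inner x (A *v y) = inner (transpose A *v x) (y::real^'n)"
  by (simp add: dot_lmul_matrix)

lemma symswap: assumes "transpose A = A" shows "inner x (A *v y) = inner y (A *v (x::real^'n))"
  by (metis adj assms inner_commute)

lemma diag_mv: "diag_mat d *v x = (\<chi> i. d i * x $ i)"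
  by (simp add: diag_mat_def matrix_vector_mult_def vec_eq_iff if_distrib if_distribR sum.delta cong: if_cong)

lemma diag_T: "transpose (diag_mat d) = diag_mat d"
  by (simp add: diag_mat_def transpose_def vec_eq_iff)

lemma quad_diag: "inner x (diag_mat d *v x) = (\<Sum>i\<in>UNIV. d i * (x $ i)^2)"
  by (simp add: diag_mv inner_vec_def power2_eq_square algebra_simps)

lemma entry_quad: "M $ j $ j = inner (axis j 1) (M *v axis j (1::real))"
  by (simp add: inner_axis' matrix_vector_mul_component inner_axis)

lemma quad_expand: assumes "transpose W = W"
  shows "inner (a + b) (W *v (a + b)) = inner a (W *v a) + 2 * inner b (W *v a) + inner b (W *v (b::real^'n))"
  using symswap[OF assms, of a b] by (simp add: algebra_simps inner_add_left inner_add_right)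

lemma eig_finite: assumes "transpose W = W" shows "finite (eigenvalues (W::real^'n^'n))"
proof -
  define f where "f e = (SOME v. v \<noteq> 0 \<and> W *v v = e *\<^sub>R v)" for e
  have f: "f e \<noteq> 0 \<and> W *v f e = e *\<^sub>R f e" if "e \<in> eigenvalues W" for e
  proof -
    have "\<exists>v. v \<noteq> 0 \<and> W *v v = e *\<^sub>R v" using that by (simp add: eigenvalues_def)
    then show ?thesis unfolding f_def by (rule someI_ex)
  qed
  have inj: "inj_on f (eigenvalues W)"
  proof (rule inj_onI)
    fix e e' assume a: "e \<in> eigenvalues W" "e' \<in> eigenvalues W" "f e = f e'"
    then have "e *\<^sub>R f e = e' *\<^sub>R f e" using f[OF a(1)] f[OF a(2)] by metis
    then show "e = e'" using f[OF a(1)] by (metis scaleR_cancel_right)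
  qed
  have "pairwise orthogonal (f ` eigenvalues W)"
  proof (auto simp: pairwise_def)
    fix e e' assume a: "e \<in> eigenvalues W" "e' \<in> eigenvalues W" "f e \<noteq> f e'"
    then have ne: "e \<noteq> e'" by auto
    have "e * inner (f e) (f e') = inner (W *v f e) (f e')" using f[OF a(1)] by simp
    also have "\<dots> = inner (f e) (W *v f e')" by (metis symswap[OF assms] inner_commute)
    also have "\<dots> = e' * inner (f e) (f e')" using f[OF a(2)] by simp
    finally show "orthogonal (f e) (f e')" using ne unfolding orthogonal_def
      by (metis mult_right_cancel)
  qed
  moreover have "0 \<notin> f ` eigenvalues W" using f by auto
  ultimately have "finite (f ` eigenvalues W)"
    using pairwise_orthogonal_independent independent_bound by blast
  then show ?thesis using inj finite_imageD by blast
qed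

lemma rayleigh: assumes sym: "transpose W = W"
  shows "\<exists>\<mu>\<in>eigenvalues W. \<forall>x. \<mu> * inner x x \<le> inner x (W *v (x::real^'n))"
proof -
  define q where "q y = inner y (W *v y)" for y :: "real^'n"
  have cont: "continuous_on (sphere 0 1) q" unfolding q_def
    by (intro continuous_intros linear_continuous_on matrix_vector_mul_bounded_linear)
  have ne: "sphere (0::real^'n) 1 \<noteq> {}"
  proof -
    obtain k :: 'n where True by blast
    have "axis k (1::real) \<in> sphere 0 1" by simp
    then show ?thesis by blast
  qed
  obtain x0 where x0: "x0 \<in> sphere 0 1" and mn: "\<forall>y\<in>sphere 0 1. q x0 \<le> q y"
    using continuous_attains_inf[OF compact_sphere ne cont] by blast
  define \<mu> where "\<mu> = q x0"
  have x0n: "inner x0 x0 = 1" using x0 by (simp add: dot_square_norm)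
  have bnd: "\<mu> * inner x x \<le> q x" for x
  proof (cases "x = 0")
    case True then show ?thesis by (simp add: q_def)
  next
    case False
    define u where "u = (1 / norm x) *\<^sub>R x"
    have "u \<in> sphere 0 1" using False by (simp add: u_def)
    then have "\<mu> \<le> q u" using mn \<mu>_def by blast
    also have "q u = (1 / norm x)^2 * q x" by (simp add: q_def u_def matrix_vector_mult_scaleR power2_eq_square)
    finally have "\<mu> * (norm x)^2 \<le> q x" using False by (simp add: field_simps)
    then show ?thesis by (simp add: dot_square_norm)
  qed
  define g where "g y = q y - \<mu> * inner y y" for y
  have gnn: "g y \<ge> 0" for y using bnd[of y] by (simp add: g_def)
  have g0: "g x0 = 0" using x0n by (simp add: g_def \<mu>_def)
  define r where "r = W *v x0 - \<mu> *\<^sub>R x0"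
  have gexp: "g (a + b) = g a + 2 * inner b (W *v a - \<mu> *\<^sub>R a) + g b" for a b
    using quad_expand[OF sym, of a b] by (simp add: g_def q_def inner_add_left inner_add_right inner_diff_right inner_commute algebra_simps)
  have key: "- 2 * s * inner r r + s^2 * g r \<ge> 0" for s
  proof -
    have gs: "g (c *\<^sub>R v) = c^2 * g v" for c v
      by (simp add: g_def q_def matrix_vector_mult_scaleR power2_eq_square algebra_simps)
    have "g (x0 + (-s) *\<^sub>R r) = 0 + 2 * inner ((-s) *\<^sub>R r) r + g ((-s) *\<^sub>R r)"
      using gexp[of x0 "(-s) *\<^sub>R r"] g0 r_def by simp
    also have "\<dots> = -2 * s * inner r r + s^2 * g r" by (simp only: gs inner_scaleR_left) simp
    finally have "g (x0 + (-s) *\<^sub>R r) = -2 * s * inner r r + s^2 * g r" .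
    then show ?thesis using gnn by metis
  qed
  have "r = 0"
  proof (rule ccontr)
    assume "r \<noteq> 0"
    then have rr: "inner r r > 0" by simp
    define G where "G = g r"
    have G: "G \<ge> 0" using gnn G_def by simp
    define s where "s = inner r r / (G + 1)"
    have sp: "s > 0" using rr G by (simp add: s_def)
    have "- 2 * s * inner r r + s^2 * G \<ge> 0" using key G_def by simp
    then have "s * (s * G - 2 * inner r r) \<ge> 0" by (simp add: power2_eq_square algebra_simps)
    then have "s * G \<ge> 2 * inner r r" using sp by (simp add: zero_le_mult_iff)
    moreover have "s * G < inner r r" using rr G by (simp add: s_def field_simps)
    ultimately show False using rr by simp
  qed
  then have "W *v x0 = \<mu> *\<^sub>R x0" by (simp add: r_def)
  moreover have "x0 \<noteq> 0" using x0 by auto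
  ultimately have "\<mu> \<in> eigenvalues W" unfolding eigenvalues_def by blast
  then show ?thesis using bnd unfolding q_def by blast
qed

lemma kalman_id:
  fixes Sg C V S T :: "real^'n^'n"
  assumes sSg: "transpose Sg = Sg" and sC: "transpose C = C" and sV: "transpose V = V"
    and S: "S = C ** Sg ** C + V" and ST: "S ** T = mat 1"
  shows "inner x ((Sg - Sg ** C ** T ** C ** Sg) *v x)
       + inner (y - T *v (C *v (Sg *v x))) (S *v (y - T *v (C *v (Sg *v x))))
       = inner (x - C *v y) (Sg *v (x - C *v y)) + inner y (V *v y)"
proof -
  define z where "z = C *v (Sg *v x)"
  define w where "w = T *v z"
  have Sv: "inner a (S *v b) = inner (C *v a) (Sg *v (C *v b)) + inner a (V *v b)" for a b
  proof -
    have "inner a (S *v b) = inner a (C *v (Sg *v (C *v b))) + inner a (V *v b)"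
      by (simp add: S matrix_vector_mul_assoc matrix_vector_mult_add_rdistrib inner_add_right matrix_mul_assoc)
    also have "inner a (C *v (Sg *v (C *v b))) = inner (C *v a) (Sg *v (C *v b))"
      by (metis adj sC)
    finally show ?thesis .
  qed
  have Ssym: "inner a (S *v b) = inner b (S *v a)" for a b
    using Sv[of a b] Sv[of b a] symswap[OF sSg, of "C *v a" "C *v b"] symswap[OF sV, of a b] by simp
  have f1: "(Sg ** C ** T ** C ** Sg) *v x = Sg *v (C *v w)"
    by (simp add: w_def z_def matrix_vector_mul_assoc matrix_mul_assoc)
  have f2: "inner x (Sg *v (C *v w)) = inner z w"
    by (metis adj sSg sC z_def)
  have Sw: "S *v w = z" by (simp add: w_def matrix_vector_mul_assoc ST)
  have L: "inner x ((Sg - Sg ** C ** T ** C ** Sg) *v x) = inner x (Sg *v x) - inner z w"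
    using f1 f2 by (simp add: matrix_vector_mult_diff_rdistrib inner_diff_right)
  have L2: "inner (y - w) (S *v (y - w)) = inner y (S *v y) - 2 * inner y z + inner w z"
  proof -
    have "inner (y - w) (S *v (y - w)) = inner y (S *v y) - inner y (S *v w) - inner w (S *v y) + inner w (S *v w)"
      by (simp add: matrix_vector_mult_diff_distrib inner_diff_left inner_diff_right)
    also have "inner w (S *v y) = inner y (S *v w)" by (rule Ssym)
    finally show ?thesis using Sw by simp
  qed
  have R1: "inner (x - C *v y) (Sg *v (x - C *v y)) = inner x (Sg *v x) - 2 * inner (C *v y) (Sg *v x) + inner (C *v y) (Sg *v (C *v y))"
    using symswap[OF sSg, of x "C *v y"]
    by (simp add: matrix_vector_mult_diff_distrib inner_diff_left inner_diff_right)
  have R2: "inner (C *v y) (Sg *v x) = inner y z"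
    by (metis adj sC z_def)
  show ?thesis
    unfolding z_def[symmetric] w_def[symmetric]
    using L L2 R1 R2 Sv[of y y] by (simp add: inner_commute)
qed

lemma scalar_bound:
  fixes a s c y :: real
  assumes "a > 0" "s > 0"
  shows "s / (c^2 + s / a) \<le> a * (1 - c * y)^2 + s * y^2"
proof -
  have d: "a * c^2 + s > 0" using assms by (simp add: add_nonneg_pos)
  have eq: "s / (c^2 + s / a) = a * s / (a * c^2 + s)" using assms by (simp add: field_simps)
  have "(a * c^2 + s) * (a * (1 - c * y)^2 + s * y^2) - a * s = (a * c * (1 - c * y) - s * y)^2"
    by (simp add: power2_eq_square algebra_simps)
  then have "a * s \<le> (a * c^2 + s) * (a * (1 - c * y)^2 + s * y^2)"
    by (metis diff_ge_0_iff_ge zero_le_power2)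
  then show ?thesis unfolding eq using d by (simp add: divide_le_eq mult.commute)
qed

lemma inner_ge_comp: "inner v v \<ge> (v $ j)^2" for v :: "real^'n"
proof -
  have "(v $ j)^2 \<le> (\<Sum>i\<in>UNIV. (v $ i)^2)" by (rule member_le_sum) auto
  then show ?thesis by (simp add: inner_vec_def power2_eq_square)
qed

theorem theorem3:
  fixes A W Sigma :: "real^'n^'n"
    and c sigma :: "'n \<Rightarrow> real"
    and l u :: 'n
  assumes W_pd: "pos_def W"
    and c_pos: "\<And>j. c j > 0"
    and sigma_pos: "\<And>j. sigma j > 0"
    and l_argmin: "\<And>j. (c l)\<^sup>2 / (sigma l)\<^sup>2 \<le> (c j)\<^sup>2 / (sigma j)\<^sup>2"
    and u_argmax: "\<And>j. (c j)\<^sup>2 / (sigma j)\<^sup>2 \<le> (c u)\<^sup>2 / (sigma u)\<^sup>2"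
    and Sigma_psd: "pos_semidef Sigma"
    and DARE: "Sigma = A ** Sigma ** transpose A
        - A ** Sigma ** transpose (diag_mat c)
          ** matrix_inv (diag_mat c ** Sigma ** transpose (diag_mat c) + diag_mat (\<lambda>j. (sigma j)\<^sup>2))
          ** diag_mat c ** Sigma ** transpose A + W"
  shows "let C = diag_mat c; V = diag_mat (\<lambda>j. (sigma j)\<^sup>2);
             SigmaBar = Sigma - Sigma ** transpose C ** matrix_inv (C ** Sigma ** transpose C + V) ** C ** Sigma
         in real CARD('n) * (sigma u)\<^sup>2 / ((c u)\<^sup>2 + (sigma u)\<^sup>2 / lambda_min W) \<le> trace SigmaBar
          \<and> trace SigmaBar \<le> real CARD('n) * ((sigma l)\<^sup>2 / (c l)\<^sup>2)"
proof -
  define C where "C = diag_mat c"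
  define V where "V = diag_mat (\<lambda>j. (sigma j)\<^sup>2)"
  define S where "S = C ** Sigma ** C + V"
  have CT: "transpose C = C" by (simp add: C_def diag_T)
  have VT: "transpose V = V" by (simp add: V_def diag_T)
  have SgT: "transpose Sigma = Sigma" using Sigma_psd by (simp add: pos_semidef_def sym_mat_def)
  have Sgq: "inner x (Sigma *v x) \<ge> 0" for x using Sigma_psd by (simp add: pos_semidef_def)
  have Vq: "inner x (V *v x) = (\<Sum>i\<in>UNIV. (sigma i)^2 * (x $ i)^2)" for x
    by (simp add: V_def quad_diag)
  have Vq0: "inner x (V *v x) \<ge> 0" for x unfolding Vq by (intro sum_nonneg) simp
  have Sq: "inner x (S *v x) = inner (C *v x) (Sigma *v (C *v x)) + inner x (V *v x)" for x
  proof -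
    have "inner x (S *v x) = inner x (C *v (Sigma *v (C *v x))) + inner x (V *v x)"
      by (simp add: S_def matrix_vector_mul_assoc matrix_vector_mult_add_rdistrib inner_add_right matrix_mul_assoc)
    also have "inner x (C *v (Sigma *v (C *v x))) = inner (C *v x) (Sigma *v (C *v x))"
      by (metis adj CT)
    finally show ?thesis .
  qed
  have Sq0: "inner x (S *v x) \<ge> 0" for x using Sq[of x] Sgq[of "C *v x"] Vq0[of x] by simp
  have ker: "\<forall>x. S *v x = 0 \<longrightarrow> x = 0"
  proof (intro allI impI)
    fix x :: "real^'n" assume Sx: "S *v x = 0"
    show "x = 0"
    proof (rule ccontr)
      assume "x \<noteq> 0"
      then obtain i where xi: "x $ i \<noteq> 0" by (metis vec_eq_iff zero_index)
      have "(sigma i)^2 * (x $ i)^2 \<le> (\<Sum>i\<in>UNIV. (sigma i)^2 * (x $ i)^2)"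
        by (rule member_le_sum) auto
      moreover have "(sigma i)^2 * (x $ i)^2 > 0" using xi sigma_pos[of i] by simp
      ultimately have "inner x (V *v x) > 0" using Vq by simp
      then have "inner x (S *v x) > 0" using Sq[of x] Sgq[of "C *v x"] by simp
      then show False using Sx by simp
    qed
  qed
  then obtain B where "B ** S = mat 1" using matrix_left_invertible_ker by blast
  then have "S ** B = mat 1 \<and> B ** S = mat 1" using matrix_left_right_inverse by blast
  then have "\<exists>B. S ** B = mat 1 \<and> B ** S = mat 1" by blast
  then have ST: "S ** matrix_inv S = mat 1" unfolding matrix_inv_def by (rule someI2_ex) blast
  define T where "T = matrix_inv S"
  define SB where "SB = Sigma - Sigma ** C ** T ** C ** Sigma"
  have KI: "inner x (SB *v x) + inner (y - T *v (C *v (Sigma *v x))) (S *v (y - T *v (C *v (Sigma *v x))))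
       = inner (x - C *v y) (Sigma *v (x - C *v y)) + inner y (V *v y)" for x y
    unfolding SB_def by (rule kalman_id[OF SgT CT VT S_def]) (simp add: ST T_def)
  have SBq: "inner x (SB *v x) \<ge> 0" for x
    using KI[of x "T *v (C *v (Sigma *v x))"] Sgq[of "x - C *v (T *v (C *v (Sigma *v x)))"]
      Vq0[of "T *v (C *v (Sigma *v x))"] by simp
  have DARE': "Sigma = A ** Sigma ** transpose A - A ** Sigma ** C ** T ** C ** Sigma ** transpose A + W"
    using DARE by (simp add: diag_T C_def V_def T_def S_def)
  have SigW: "inner x (Sigma *v x) \<ge> inner x (W *v x)" for x
  proof -
    have "Sigma *v x = A *v (Sigma *v (transpose A *v x)) - A *v ((Sigma ** C ** T ** C ** Sigma) *v (transpose A *v x)) + W *v x"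
      by (subst DARE') (simp add: matrix_vector_mult_add_rdistrib matrix_vector_mult_diff_rdistrib matrix_vector_mul_assoc matrix_mul_assoc del: transpose_matrix_vector)
    also have "\<dots> = A *v (SB *v (transpose A *v x)) + W *v x"
      by (simp add: SB_def matrix_vector_mult_diff_rdistrib matrix_vector_mult_diff_distrib del: transpose_matrix_vector)
    finally have "inner x (Sigma *v x) = inner x (A *v (SB *v (transpose A *v x))) + inner x (W *v x)"
      by (simp add: inner_add_right del: transpose_matrix_vector)
    also have "inner x (A *v (SB *v (transpose A *v x))) = inner (transpose A *v x) (SB *v (transpose A *v x))"
      by (rule adj)
    finally show ?thesis using SBq[of "transpose A *v x"] by simp
  qed
  have WT: "transpose W = W" using W_pd by (simp add: pos_def_def sym_mat_def)
  obtain mu where mu: "mu \<in> eigenvalues W" "\<forall>x. mu * inner x x \<le> inner x (W *v x)"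
    using rayleigh[OF WT] by blast
  define lam where "lam = lambda_min W"
  have fin: "finite (eigenvalues W)" by (rule eig_finite[OF WT])
  have lam_le: "lam \<le> mu" unfolding lam_def lambda_min_def using fin mu(1) by simp
  have lam_in: "lam \<in> eigenvalues W" unfolding lam_def lambda_min_def using fin mu(1) by (intro Min_in) auto
  have lam_pos: "lam > 0"
  proof -
    obtain v where v: "v \<noteq> 0" "W *v v = lam *\<^sub>R v" using lam_in by (auto simp: eigenvalues_def)
    have "inner v (W *v v) > 0" using W_pd v(1) by (simp add: pos_def_def)
    then have "lam * inner v v > 0" using v(2) by simp
    moreover have "inner v v > 0" using v(1) by simp
    ultimately show ?thesis by (simp add: zero_less_mult_iff)
  qed
  have Sig_lam: "inner x (Sigma *v x) \<ge> lam * inner x x" for x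
  proof -
    have "lam * inner x x \<le> mu * inner x x" using lam_le by (simp add: mult_right_mono)
    then show ?thesis using mu(2) SigW[of x] by (meson order_trans)
  qed
  have lower: "(sigma u)\<^sup>2 / ((c u)\<^sup>2 + (sigma u)\<^sup>2 / lam) \<le> SB $ j $ j" for j
  proof -
    define x :: "real^'n" where "x = axis j 1"
    define y where "y = T *v (C *v (Sigma *v x))"
    have "SB $ j $ j = inner (x - C *v y) (Sigma *v (x - C *v y)) + inner y (V *v y)"
      using KI[of x y] by (simp add: entry_quad x_def y_def)
    moreover have "inner (x - C *v y) (Sigma *v (x - C *v y)) \<ge> lam * ((x - C *v y) $ j)^2"
      using Sig_lam[of "x - C *v y"] inner_ge_comp[of "x - C *v y" j] lam_pos
      by (meson mult_left_mono less_imp_le order_trans)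
    moreover have "inner y (V *v y) \<ge> (sigma j)^2 * (y $ j)^2"
      unfolding Vq by (rule member_le_sum) auto
    moreover have "(x - C *v y) $ j = 1 - c j * y $ j" by (simp add: x_def C_def diag_mv)
    ultimately have "SB $ j $ j \<ge> lam * (1 - c j * y $ j)^2 + (sigma j)^2 * (y $ j)^2" by simp
    moreover have "(sigma j)^2 / ((c j)^2 + (sigma j)^2 / lam) \<le> lam * (1 - c j * y $ j)^2 + (sigma j)^2 * (y $ j)^2"
      by (rule scalar_bound) (use lam_pos sigma_pos[of j] in auto)
    moreover have "(sigma u)\<^sup>2 / ((c u)\<^sup>2 + (sigma u)\<^sup>2 / lam) \<le> (sigma j)^2 / ((c j)^2 + (sigma j)^2 / lam)"
    proof -
      have e: "(sigma k)\<^sup>2 / ((c k)\<^sup>2 + (sigma k)\<^sup>2 / lam) = 1 / ((c k)\<^sup>2 / (sigma k)\<^sup>2 + 1 / lam)" for k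
        using sigma_pos[of k] lam_pos by (simp add: field_simps)
      have p: "0 < (c j)\<^sup>2 / (sigma j)\<^sup>2 + 1 / lam" using lam_pos by (simp add: add_nonneg_pos)
      show ?thesis unfolding e using u_argmax[of j] p by (intro divide_left_mono) auto
    qed
    ultimately show ?thesis by linarith
  qed
  have diag_upper: "SB $ j $ j \<le> (sigma l)\<^sup>2 / (c l)\<^sup>2" for j
  proof -
    define x :: "real^'n" where "x = axis j 1"
    define y :: "real^'n" where "y = axis j (1 / c j)"
    have Cy: "C *v y = x" using c_pos[of j]
      by (simp add: C_def diag_mv x_def y_def vec_eq_iff axis_def)
    have Vy: "inner y (V *v y) = (sigma j)^2 / (c j)^2"
      by (simp add: Vq y_def axis_def power2_eq_square if_distrib if_distribR cong: if_cong)
    have "SB $ j $ j + inner (y - T *v (C *v (Sigma *v x))) (S *v (y - T *v (C *v (Sigma *v x)))) = (sigma j)^2 / (c j)^2"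
      using KI[of x y] by (simp add: entry_quad x_def Cy Vy)
    then have "SB $ j $ j \<le> (sigma j)^2 / (c j)^2" using Sq0 by (smt (verit))
    also have "\<dots> \<le> (sigma l)\<^sup>2 / (c l)\<^sup>2"
    proof -
      have "inverse ((c j)\<^sup>2 / (sigma j)\<^sup>2) \<le> inverse ((c l)\<^sup>2 / (sigma l)\<^sup>2)"
        using l_argmin[of j] c_pos[of l] sigma_pos[of l] by (intro le_imp_inverse_le) auto
      then show ?thesis by simp
    qed
    finally show ?thesis .
  qed
  have tr: "trace SB = (\<Sum>j\<in>UNIV. SB $ j $ j)" by (simp add: trace_def)
  have "real CARD('n) * (sigma u)\<^sup>2 / ((c u)\<^sup>2 + (sigma u)\<^sup>2 / lam) \<le> trace SB"
  proof -
    have "(\<Sum>j\<in>(UNIV::'n set). (sigma u)\<^sup>2 / ((c u)\<^sup>2 + (sigma u)\<^sup>2 / lam)) \<le> (\<Sum>j\<in>UNIV. SB $ j $ j)"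
      by (rule sum_mono) (rule lower)
    then show ?thesis unfolding tr by simp
  qed
  moreover have "trace SB \<le> real CARD('n) * ((sigma l)\<^sup>2 / (c l)\<^sup>2)"
  proof -
    have "(\<Sum>j\<in>(UNIV::'n set). SB $ j $ j) \<le> (\<Sum>j\<in>(UNIV::'n set). (sigma l)\<^sup>2 / (c l)\<^sup>2)"
      by (rule sum_mono) (rule diag_upper)
    then show ?thesis unfolding tr by simp
  qed
  moreover have "SB = Sigma - Sigma ** transpose C ** matrix_inv (C ** Sigma ** transpose C + V) ** C ** Sigma"
    by (simp add: SB_def T_def S_def CT)
  ultimately show ?thesis
    unfolding Let_def C_def[symmetric] V_def[symmetric] lam_def[symmetric] by simp
qed

end
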